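(* For all $p,q\in\mathbb Z$, $r,s\ge0$ and $2\le n\le\infty$, the $n$-multicomplex $\mathcal ZW^n_s(p,q)$ is cofibrant in the $r$-model structure on $\mathrm{Ch}_n$; that is, for every morphism $f\colon A\to B$ of $n$-multicomplexes that is an $E_r$-quasi-isomorphism with $E_i(f)$ bidegree-wise surjective for all $0\le i\le r$, every morphism $\mathcal ZW^n_s(p,q)\to B$ lifts through $f$.
   Context: $R$ is a commutative unital ring. For $1\le n\le\infty$, an $n$-multicomplex is a $\mathbb Z\times\mathbb Z$-bigraded $R$-module $A$ with $R$-linear maps $d_i$ ($i\ge0$) of bidegree $(-i,1-i)$ such that $\sum_{i+j=l}(-1)^id_id_j=0$ for all $l\ge0$ and $d_i=0$ for $i\ge n$; morphisms are bidegree $(0,0)$ maps commuting with all $d_i$; category $\mathrm{Ch}_n$. Spectral sequence: $Z_0^{p,q}(A)=A^{p,q}$; for $r\ge1$, $Z_r^{p,q}(A)$ is the set of $a_0\in A^{p,q}$ for which there exist $a_j\in A^{p-j,q-j}$ ($1\le j\le r-1$) with $\sum_{i+j=l}(-1)^id_ia_j=0$ for $0\le l\le r-1$. $B_0=0$, $B_1^{p,q}(A)=A^{p,q}\cap\operatorname{im}d_0$, and for $r\ge2$, $B_r^{p,q}(A)$ is the set of $x\in A^{p,q}$ for which there exist $b_i\in A^{p+r-1-i,q+r-2-i}$ ($0\le i\le r-1$) with $x=\sum_{i=0}^{r-1}(-1)^id_ib_{r-1-i}$ and $\sum_{i=0}^l(-1)^id_ib_{l-i}=0$ for $0\le l\le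 r-2$. $E_r^{p,q}(A)=Z_r^{p,q}(A)/B_r^{p,q}(A)$, the spectral sequence of the column-filtered total complex; $f$ is an $E_r$-quasi-isomorphism if $E_{r+1}(f)$ is an isomorphism. The $r$-model structure on $\mathrm{Ch}_n$ ($2\le n\le\infty$) has weak equivalences the $E_r$-quasi-isomorphisms and fibrations the morphisms $f$ with $E_i(f)$ bidegree-wise surjective for $0\le i\le r$. $\mathbb D^n(p,q)$ is the free $n$-multicomplex on one generator in bidegree $(p,q)$. $\mathcal ZW^n_0(p,q)=\mathbb D^n(p,q)$; for $s\ge1$, $\mathcal ZW^n_s(p,q)$ is the $n$-multicomplex generated by $a_0,\dots,a_{s-1}$, $a_i$ in bidegree $(p-i,q-i)$, subject to the relations $\sum_{i+j=l}(-1)^id_ia_j=0$ for $0\le l\le s-1$ (equivalently the iterated pushout construction of the paper). *)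

theory Defs
  imports Main "HOL-Library.Extended_Nat"
begin

text \<open>A bigraded R-module is given as a family of submodules
  A p q of an ambient R-module (type 'm, scalar action sc), one for each bidegree (p,q).
  The structure map d_i is given bidegree-wise: d i p q is d_i restricted to A^{p,q},
  landing in A^{p-i,q+1-i}.\<close>

definition alt :: "nat \<Rightarrow> 'm::ab_group_add \<Rightarrow> 'm" where
  "alt i y = (if even i then y else - y)"

definition multicomplex ::
  "enat \<Rightarrow> ('r::comm_ring_1 \<Rightarrow> 'm::ab_group_add \<Rightarrow> 'm) \<Rightarrow> (int \<Rightarrow> int \<Rightarrow> 'm set)
    \<Rightarrow> (nat \<Rightarrow> int \<Rightarrow> int \<Rightarrow> 'm \<Rightarrow> 'm) \<Rightarrow> bool" where
  "multicomplex n sc A d \<longleftrightarrow>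
     module sc \<and> (\<forall>p q. module.subspace sc (A p q)) \<and>
     (\<forall>i p q. \<forall>x\<in>A p q. d i p q x \<in> A (p - int i) (q + 1 - int i)) \<and>
     (\<forall>i p q. \<forall>x\<in>A p q. \<forall>y\<in>A p q. d i p q (x + y) = d i p q x + d i p q y) \<and>
     (\<forall>i p q c. \<forall>x\<in>A p q. d i p q (sc c x) = sc c (d i p q x)) \<and>
     (\<forall>i p q. n \<le> enat i \<longrightarrow> (\<forall>x\<in>A p q. d i p q x = 0)) \<and>
     (\<forall>l p q. \<forall>x\<in>A p q.
        (\<Sum>i\<le>l. alt i (d i (p - int (l - i)) (q + 1 - int (l - i)) (d (l - i) p q x))) = 0)"

definition mc_hom ::
  "('r::comm_ring_1 \<Rightarrow> 'a::ab_group_add \<Rightarrow> 'a) \<Rightarrow> (int \<Rightarrow> int \<Rightarrow> 'a set) \<Rightarrow> (nat \<Rightarrow> int \<Rightarrow> int \<Rightarrow> 'a \<Rightarrow> 'a)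
    \<Rightarrow> ('r \<Rightarrow> 'b::ab_group_add \<Rightarrow> 'b) \<Rightarrow> (int \<Rightarrow> int \<Rightarrow> 'b set) \<Rightarrow> (nat \<Rightarrow> int \<Rightarrow> int \<Rightarrow> 'b \<Rightarrow> 'b)
    \<Rightarrow> (int \<Rightarrow> int \<Rightarrow> 'a \<Rightarrow> 'b) \<Rightarrow> bool" where
  "mc_hom scA A dA scB B dB f \<longleftrightarrow>
     (\<forall>p q. \<forall>x\<in>A p q. f p q x \<in> B p q) \<and>
     (\<forall>p q. \<forall>x\<in>A p q. \<forall>y\<in>A p q. f p q (x + y) = f p q x + f p q y) \<and>
     (\<forall>p q c. \<forall>x\<in>A p q. f p q (scA c x) = scB c (f p q x)) \<and>
     (\<forall>i p q. \<forall>x\<in>A p q. f (p - int i) (q + 1 - int i) (dA i p q x) = dB i p q (f p q x))"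

text \<open>Z_r^{p,q}(A). For r = 0 the conditions reduce to a 0 = x \<in> A p q.\<close>
definition Zset :: "nat \<Rightarrow> (int \<Rightarrow> int \<Rightarrow> 'm::ab_group_add set) \<Rightarrow> (nat \<Rightarrow> int \<Rightarrow> int \<Rightarrow> 'm \<Rightarrow> 'm)
    \<Rightarrow> int \<Rightarrow> int \<Rightarrow> 'm set" where
  "Zset r A d p q = {x. \<exists>a. a 0 = x \<and>
       (\<forall>j\<le>r - 1. a j \<in> A (p - int j) (q - int j)) \<and>
       (\<forall>l<r. (\<Sum>i\<le>l. alt i (d i (p - int (l - i)) (q - int (l - i)) (a (l - i)))) = 0)}"

text \<open>B_r^{p,q}(A). For r = 0 this is {0}; for r = 1 it is A^{p,q} \<inter> im d_0.\<close>
definition Bset :: "nat \<Rightarrow> (int \<Rightarrow> int \<Rightarrow> 'm::ab_group_add set) \<Rightarrow> (nat \<Rightarrow> int \<Rightarrow> int \<Rightarrow> 'm \<Rightarrow> 'm)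
    \<Rightarrow> int \<Rightarrow> int \<Rightarrow> 'm set" where
  "Bset r A d p q = {x. x \<in> A p q \<and> (\<exists>b.
       (\<forall>k<r. b k \<in> A (p + int r - 1 - int k) (q + int r - 2 - int k)) \<and>
       x = (\<Sum>i<r. alt i (d i (p + int r - 1 - int (r - 1 - i)) (q + int r - 2 - int (r - 1 - i))
                              (b (r - 1 - i)))) \<and>
       (\<forall>l. l + 2 \<le> r \<longrightarrow>
          (\<Sum>i\<le>l. alt i (d i (p + int r - 1 - int (l - i)) (q + int r - 2 - int (l - i))
                              (b (l - i)))) = 0))}"

text \<open>E_r^{p,q}(A) = Z_r/B_r, realised as the set of cosets x + B_r, x \<in> Z_r.\<close>
definition Ecoset :: "nat \<Rightarrow> (int \<Rightarrow> int \<Rightarrow> 'm::ab_group_add set) \<Rightarrow> (nat \<Rightarrow> int \<Rightarrow> int \<Rightarrow> 'm \<Rightarrow> 'm)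
    \<Rightarrow> int \<Rightarrow> int \<Rightarrow> 'm \<Rightarrow> 'm set" where
  "Ecoset r A d p q x = (\<lambda>b. x + b) ` Bset r A d p q"

definition Eset :: "nat \<Rightarrow> (int \<Rightarrow> int \<Rightarrow> 'm::ab_group_add set) \<Rightarrow> (nat \<Rightarrow> int \<Rightarrow> int \<Rightarrow> 'm \<Rightarrow> 'm)
    \<Rightarrow> int \<Rightarrow> int \<Rightarrow> 'm set set" where
  "Eset r A d p q = Ecoset r A d p q ` Zset r A d p q"

definition Emap :: "nat \<Rightarrow> (int \<Rightarrow> int \<Rightarrow> 'b::ab_group_add set) \<Rightarrow> (nat \<Rightarrow> int \<Rightarrow> int \<Rightarrow> 'b \<Rightarrow> 'b)
    \<Rightarrow> (int \<Rightarrow> int \<Rightarrow> 'a \<Rightarrow> 'b) \<Rightarrow> int \<Rightarrow> int \<Rightarrow> 'a set \<Rightarrow> 'b set" where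
  "Emap r B dB f p q X = Ecoset r B dB p q (f p q (SOME x. x \<in> X))"

text \<open>f is an E_r-quasi-isomorphism: E_{r+1}(f) is bijective in every bidegree.\<close>
definition E_quasi_iso :: "nat \<Rightarrow> (int \<Rightarrow> int \<Rightarrow> 'a::ab_group_add set) \<Rightarrow> (nat \<Rightarrow> int \<Rightarrow> int \<Rightarrow> 'a \<Rightarrow> 'a)
    \<Rightarrow> (int \<Rightarrow> int \<Rightarrow> 'b::ab_group_add set) \<Rightarrow> (nat \<Rightarrow> int \<Rightarrow> int \<Rightarrow> 'b \<Rightarrow> 'b)
    \<Rightarrow> (int \<Rightarrow> int \<Rightarrow> 'a \<Rightarrow> 'b) \<Rightarrow> bool" where
  "E_quasi_iso r A dA B dB f \<longleftrightarrow>
     (\<forall>p q. bij_betw (Emap (Suc r) B dB f p q) (Eset (Suc r) A dA p q) (Eset (Suc r) B dB p q))"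

definition E_fib :: "nat \<Rightarrow> (int \<Rightarrow> int \<Rightarrow> 'a::ab_group_add set) \<Rightarrow> (nat \<Rightarrow> int \<Rightarrow> int \<Rightarrow> 'a \<Rightarrow> 'a)
    \<Rightarrow> (int \<Rightarrow> int \<Rightarrow> 'b::ab_group_add set) \<Rightarrow> (nat \<Rightarrow> int \<Rightarrow> int \<Rightarrow> 'b \<Rightarrow> 'b)
    \<Rightarrow> (int \<Rightarrow> int \<Rightarrow> 'a \<Rightarrow> 'b) \<Rightarrow> bool" where
  "E_fib r A dA B dB f \<longleftrightarrow>
     (\<forall>i\<le>r. \<forall>p q. Emap i B dB f p q ` Eset i A dA p q = Eset i B dB p q)"

text \<open>Generator tuples (a_0,...,a_{max s 1 - 1}) with a_j in bidegree (p-j,q-j)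
  satisfying the relations of ZW_s(p,q) for 0 \<le> l \<le> s-1 (for s = 0: one free generator).\<close>
definition ZW_tuple :: "nat \<Rightarrow> int \<Rightarrow> int \<Rightarrow> (int \<Rightarrow> int \<Rightarrow> 'm::ab_group_add set)
    \<Rightarrow> (nat \<Rightarrow> int \<Rightarrow> int \<Rightarrow> 'm \<Rightarrow> 'm) \<Rightarrow> (nat \<Rightarrow> 'm) \<Rightarrow> bool" where
  "ZW_tuple s p q A d a \<longleftrightarrow>
     (\<forall>j\<le>s - 1. a j \<in> A (p - int j) (q - int j)) \<and>
     (\<forall>l<s. (\<Sum>i\<le>l. alt i (d i (p - int (l - i)) (q - int (l - i)) (a (l - i)))) = 0)"

text \<open>(Z, dZ) with generators gen is (a model of) ZW^n_s(p,q): the n-multicomplex generated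
  by gen subject to the relations, characterised by its universal property with respect to
  n-multicomplexes whose ambient module is of type 'm with action sc.\<close>
definition is_ZW :: "enat \<Rightarrow> nat \<Rightarrow> int \<Rightarrow> int
    \<Rightarrow> ('r::comm_ring_1 \<Rightarrow> 'z::ab_group_add \<Rightarrow> 'z) \<Rightarrow> (int \<Rightarrow> int \<Rightarrow> 'z set) \<Rightarrow> (nat \<Rightarrow> int \<Rightarrow> int \<Rightarrow> 'z \<Rightarrow> 'z)
    \<Rightarrow> (nat \<Rightarrow> 'z) \<Rightarrow> ('r \<Rightarrow> 'm::ab_group_add \<Rightarrow> 'm) \<Rightarrow> bool" where
  "is_ZW n s p q scZ Z dZ gen sc \<longleftrightarrow>
     multicomplex n scZ Z dZ \<and> ZW_tuple s p q Z dZ gen \<and>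
     (\<forall>B dB. multicomplex n sc B dB \<longrightarrow>
        (\<forall>b. ZW_tuple s p q B dB b \<longrightarrow>
           (\<exists>h. mc_hom scZ Z dZ sc B dB h \<and>
                (\<forall>j\<le>s - 1. h (p - int j) (q - int j) (gen j) = b j))) \<and>
        (\<forall>h h'. mc_hom scZ Z dZ sc B dB h \<and> mc_hom scZ Z dZ sc B dB h' \<and>
                (\<forall>j\<le>s - 1. h (p - int j) (q - int j) (gen j) = h' (p - int j) (q - int j) (gen j))
            \<longrightarrow> (\<forall>p' q'. \<forall>x\<in>Z p' q'. h p' q' x = h' p' q' x)))"

end

theory Submission
  imports Defs
begin

lemma alt_add: "alt i (x + y) = alt i x + alt i (y::'a::ab_group_add)"
  by (simp add: alt_def)
lemma alt_zero[simp]: "alt i (0::'a::ab_group_add) = 0"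
  by (simp add: alt_def)
lemma alt_neg: "alt i (- x) = - alt i (x::'a::ab_group_add)"
  by (simp add: alt_def)
lemma alt_diff: "alt i (x - y) = alt i x - alt i (y::'a::ab_group_add)"
  by (simp add: alt_def)
lemma alt_alt: "alt i (alt j x) = alt (i + j) (x::'a::ab_group_add)"
  by (simp add: alt_def)
lemma alt_alt_same[simp]: "alt i (alt i x) = (x::'a::ab_group_add)"
  by (simp add: alt_def)
lemma alt_comm: "alt i (alt j x) = alt j (alt i (x::'a::ab_group_add))"
  by (simp add: alt_def)
lemma alt_sum: "alt i (sum g S) = (\<Sum>x\<in>S. alt i (g x :: 'a::ab_group_add))"
  by (simp add: alt_def sum_negf)

lemma sum_tri: "(\<Sum>i\<le>(m::nat). \<Sum>j\<le>m-i. G i j) = (\<Sum>l\<le>m. \<Sum>i\<le>l. G i (l - i))"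
proof -
  have "(\<Sum>i\<le>(m::nat). \<Sum>j\<le>m-i. G i j) = (\<Sum>(i,j)\<in>Sigma {..m} (\<lambda>i. {..m-i}). G i j)"
    by (simp add: sum.Sigma)
  also have "Sigma {..m} (\<lambda>i. {..m-i}) = {(i,j). i+j \<le> m}" by auto
  also have "(\<Sum>(i,j)\<in>{(i,j). i+j \<le> m}. G i j) = (\<Sum>l\<le>m. \<Sum>i\<le>l. G i (l - i))"
    by (rule sum.triangle_reindex_eq)
  finally show ?thesis .
qed

definition Dal :: "(nat \<Rightarrow> int \<Rightarrow> int \<Rightarrow> 'm \<Rightarrow> 'm) \<Rightarrow> int \<Rightarrow> int \<Rightarrow> (nat \<Rightarrow> 'm) \<Rightarrow> nat \<Rightarrow> 'm::ab_group_add" where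
  "Dal d P Q a m = (\<Sum>i\<le>m. alt i (d i (P - int (m - i)) (Q - int (m - i)) (a (m - i))))"
definition Dun :: "(nat \<Rightarrow> int \<Rightarrow> int \<Rightarrow> 'm \<Rightarrow> 'm) \<Rightarrow> int \<Rightarrow> int \<Rightarrow> (nat \<Rightarrow> 'm) \<Rightarrow> nat \<Rightarrow> 'm::ab_group_add" where
  "Dun d P Q a m = (\<Sum>i\<le>m. d i (P - int (m - i)) (Q - int (m - i)) (a (m - i)))"

definition ch :: "(int \<Rightarrow> int \<Rightarrow> 'm set) \<Rightarrow> int \<Rightarrow> int \<Rightarrow> (nat \<Rightarrow> 'm) \<Rightarrow> bool" where
  "ch A P Q a \<longleftrightarrow> (\<forall>k. a k \<in> A (P - int k) (Q - int k))"

lemma Dal_local: "(\<And>k. k \<le> m \<Longrightarrow> a k = b k) \<Longrightarrow> Dal d P Q a m = Dal d P Q b m"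
  unfolding Dal_def by (intro sum.cong) auto

lemma mem_cong: "x \<in> A p q \<Longrightarrow> p = p' \<Longrightarrow> q = q' \<Longrightarrow> x \<in> A p' q'" by simp

context
  fixes n and sc :: "'r::comm_ring_1 \<Rightarrow> 'm::ab_group_add \<Rightarrow> 'm" and A d
  assumes M: "multicomplex n sc A d"
begin

lemma memA: "x \<in> A p q \<Longrightarrow> p = p' \<Longrightarrow> q = q' \<Longrightarrow> x \<in> A p' q'" by simp
lemma mod: "module sc" using M by (simp add: multicomplex_def)
lemma subs: "module.subspace sc (A p q)" using M by (simp add: multicomplex_def)
lemma zeroA[simp]: "0 \<in> A p q" using module.subspace_0[OF mod subs] .
lemma addA: "x \<in> A p q \<Longrightarrow> y \<in> A p q \<Longrightarrow> x + y \<in> A p q"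
  using module.subspace_add[OF mod subs] by blast
lemma negA: "x \<in> A p q \<Longrightarrow> - x \<in> A p q"
  using module.subspace_neg[OF mod subs] by blast
lemma diffA: "x \<in> A p q \<Longrightarrow> y \<in> A p q \<Longrightarrow> x - y \<in> A p q"
  using module.subspace_diff[OF mod subs] by blast
lemma altA: "x \<in> A p q \<Longrightarrow> alt i x \<in> A p q"
  by (simp add: alt_def negA)
lemma sumA: "(\<And>x. x \<in> S \<Longrightarrow> g x \<in> A p q) \<Longrightarrow> sum g S \<in> A p q"
  using module.subspace_sum[OF mod subs] by blast
lemma dA: "x \<in> A p q \<Longrightarrow> d i p q x \<in> A (p - int i) (q + 1 - int i)"
  using M by (simp add: multicomplex_def)
lemma d_add: "x \<in> A p q \<Longrightarrow> y \<in> A p q \<Longrightarrow> d i p q (x + y) = d i p q x + d i p q y"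
  using M by (simp add: multicomplex_def)
lemma d_zero[simp]: "d i p q 0 = 0"
  using d_add[of 0 p q 0 i] by simp
lemma d_neg: "x \<in> A p q \<Longrightarrow> d i p q (- x) = - d i p q x"
proof -
  assume x: "x \<in> A p q"
  have "d i p q x + d i p q (- x) = 0" using d_add[of x p q "-x" i] negA[OF x] x by simp
  from add.inverse_unique[OF this] show ?thesis by simp
qed
lemma d_diff: "x \<in> A p q \<Longrightarrow> y \<in> A p q \<Longrightarrow> d i p q (x - y) = d i p q x - d i p q y"
  using d_add[of x p q "-y" i] negA[of y p q] d_neg[of y p q i] by simp
lemma d_alt: "x \<in> A p q \<Longrightarrow> d i p q (alt j x) = alt j (d i p q x)"
  by (simp add: alt_def d_neg)
lemma d_sum: "finite S \<Longrightarrow> (\<And>x. x \<in> S \<Longrightarrow> g x \<in> A p q) \<Longrightarrow> d i p q (sum g S) = (\<Sum>x\<in>S. d i p q (g x))"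
proof (induction S rule: finite_induct)
  case (insert x F)
  then show ?case by (simp add: d_add sumA)
qed simp
lemma rel: "x \<in> A p q \<Longrightarrow>
   (\<Sum>i\<le>l. alt i (d i (p - int (l - i)) (q + 1 - int (l - i)) (d (l - i) p q x))) = 0"
  using M by (simp add: multicomplex_def)

lemma Dal_in: "(\<And>k. k \<le> m \<Longrightarrow> a k \<in> A (P - int k) (Q - int k)) \<Longrightarrow> Dal d P Q a m \<in> A (P - int m) (Q + 1 - int m)"
  unfolding Dal_def
proof (rule sumA)
  fix i assume h: "\<And>k. k \<le> m \<Longrightarrow> a k \<in> A (P - int k) (Q - int k)" and i: "i \<in> {..m}"
  have mm: "d i (P - int (m - i)) (Q - int (m - i)) (a (m - i)) \<in> A (P - int (m - i) - int i) (Q - int (m - i) + 1 - int i)"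
    using h[of "m-i"] by (intro dA) auto
  show "alt i (d i (P - int (m - i)) (Q - int (m - i)) (a (m - i))) \<in> A (P - int m) (Q + 1 - int m)"
    by (rule altA, rule memA[OF mm]) (use i in simp_all)
qed

lemma Dun_in: "(\<And>k. k \<le> m \<Longrightarrow> a k \<in> A (P - int k) (Q - int k)) \<Longrightarrow> Dun d P Q a m \<in> A (P - int m) (Q + 1 - int m)"
  unfolding Dun_def
proof (rule sumA)
  fix i assume h: "\<And>k. k \<le> m \<Longrightarrow> a k \<in> A (P - int k) (Q - int k)" and i: "i \<in> {..m}"
  have mm: "d i (P - int (m - i)) (Q - int (m - i)) (a (m - i)) \<in> A (P - int (m - i) - int i) (Q - int (m - i) + 1 - int i)"
    using h[of "m-i"] by (intro dA) auto
  show "(d i (P - int (m - i)) (Q - int (m - i)) (a (m - i))) \<in> A (P - int m) (Q + 1 - int m)"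
    by (rule memA[OF mm]) (use i in simp_all)
qed

lemma Dal_add: "(\<And>k. k \<le> m \<Longrightarrow> a k \<in> A (P - int k) (Q - int k)) \<Longrightarrow> (\<And>k. k \<le> m \<Longrightarrow> b k \<in> A (P - int k) (Q - int k)) \<Longrightarrow>
   Dal d P Q (\<lambda>k. a k + b k) m = Dal d P Q a m + Dal d P Q b m"
  unfolding Dal_def sum.distrib[symmetric]
proof (intro sum.cong refl)
  fix x assume ha: "\<And>k. k \<le> m \<Longrightarrow> a k \<in> A (P - int k) (Q - int k)" and hb: "\<And>k. k \<le> m \<Longrightarrow> b k \<in> A (P - int k) (Q - int k)"
    and x: "x \<in> {..m}"
  have "m - x \<le> m" by simp
  note h1 = ha[OF this] and h2 = hb[OF this]
  show "alt x (d x (P - int (m - x)) (Q - int (m - x)) (a (m - x) + b (m - x))) =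
    alt x (d x (P - int (m - x)) (Q - int (m - x)) (a (m - x))) + alt x (d x (P - int (m - x)) (Q - int (m - x)) (b (m - x)))"
    by (simp only: d_add[OF h1 h2] alt_add)
qed

lemma Dal_diff: "(\<And>k. k \<le> m \<Longrightarrow> a k \<in> A (P - int k) (Q - int k)) \<Longrightarrow> (\<And>k. k \<le> m \<Longrightarrow> b k \<in> A (P - int k) (Q - int k)) \<Longrightarrow>
   Dal d P Q (\<lambda>k. a k - b k) m = Dal d P Q a m - Dal d P Q b m"
  unfolding Dal_def sum_subtractf[symmetric]
proof (intro sum.cong refl)
  fix x assume ha: "\<And>k. k \<le> m \<Longrightarrow> a k \<in> A (P - int k) (Q - int k)" and hb: "\<And>k. k \<le> m \<Longrightarrow> b k \<in> A (P - int k) (Q - int k)"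
    and x: "x \<in> {..m}"
  have "m - x \<le> m" by simp
  note h1 = ha[OF this] and h2 = hb[OF this]
  show "alt x (d x (P - int (m - x)) (Q - int (m - x)) (a (m - x) - b (m - x))) =
    alt x (d x (P - int (m - x)) (Q - int (m - x)) (a (m - x))) - alt x (d x (P - int (m - x)) (Q - int (m - x)) (b (m - x)))"
    by (simp only: d_diff[OF h1 h2] alt_diff)
qed

lemma Dal_alt: "(\<And>k. k \<le> m \<Longrightarrow> a k \<in> A (P - int k) (Q - int k)) \<Longrightarrow>
   Dal d P Q (\<lambda>k. alt t (a k)) m = alt t (Dal d P Q a m)"
  unfolding Dal_def alt_sum
proof (intro sum.cong refl)
  fix x assume ha: "\<And>k. k \<le> m \<Longrightarrow> a k \<in> A (P - int k) (Q - int k)" and x: "x \<in> {..m}"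
  have "m - x \<le> m" by simp
  note h1 = ha[OF this]
  show "alt x (d x (P - int (m - x)) (Q - int (m - x)) (alt t (a (m - x)))) =
         alt t (alt x (d x (P - int (m - x)) (Q - int (m - x)) (a (m - x))))"
    by (simp only: d_alt[OF h1] alt_comm)
qed

lemma twist: "(\<And>k. k \<le> m \<Longrightarrow> a k \<in> A (P - int k) (Q - int k)) \<Longrightarrow>
   Dal d P Q (\<lambda>k. alt k (a k)) m = alt m (Dun d P Q a m)"
  unfolding Dal_def Dun_def alt_sum
proof (intro sum.cong refl)
  fix x assume ha: "\<And>k. k \<le> m \<Longrightarrow> a k \<in> A (P - int k) (Q - int k)" and x: "x \<in> {..m}"
  have "m - x \<le> m" by simp
  note h1 = ha[OF this]
  have e: "x + (m - x) = m" using x by simp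
  show "alt x (d x (P - int (m - x)) (Q - int (m - x)) (alt (m - x) (a (m - x)))) =
         alt m (d x (P - int (m - x)) (Q - int (m - x)) (a (m - x)))"
    by (simp only: d_alt[OF h1] alt_alt e)
qed

lemma Dal_shift0: "(\<And>k. k \<le> m \<Longrightarrow> a k = 0) \<Longrightarrow> Dal d P Q a m = 0"
  unfolding Dal_def by (intro sum.neutral) auto

lemma Dal_shift: "(\<And>k. k < t \<Longrightarrow> a k = 0) \<Longrightarrow>
   Dal d P Q a (m + t) = Dal d (P - int t) (Q - int t) (\<lambda>k. a (k + t)) m"
  unfolding Dal_def
proof (rule sum.mono_neutral_cong_right)
  assume h: "\<And>k. k < t \<Longrightarrow> a k = 0"
  show "\<forall>i\<in>{..m + t} - {..m}. alt i (d i (P - int (m + t - i)) (Q - int (m + t - i)) (a (m + t - i))) = 0"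
  proof
    fix i assume "i \<in> {..m + t} - {..m}"
    then have "m + t - i < t" by auto
    then show "alt i (d i (P - int (m + t - i)) (Q - int (m + t - i)) (a (m + t - i))) = 0" by (simp add: h)
  qed
  show "\<And>x. x \<in> {..m} \<Longrightarrow> alt x (d x (P - int (m + t - x)) (Q - int (m + t - x)) (a (m + t - x))) =
         alt x (d x (P - int t - int (m - x)) (Q - int t - int (m - x)) (a (m - x + t)))"
  proof -
    fix x assume "x \<in> {..m}"
    then have e: "m + t - x = m - x + t" by auto
    have e2: "P - int (m - x + t) = P - int t - int (m - x)" "Q - int (m - x + t) = Q - int t - int (m - x)"
      by simp_all
    show "alt x (d x (P - int (m + t - x)) (Q - int (m + t - x)) (a (m + t - x))) =
         alt x (d x (P - int t - int (m - x)) (Q - int t - int (m - x)) (a (m - x + t)))"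
      unfolding e e2 ..
  qed
qed auto

lemma DD: "(\<And>k. k \<le> m \<Longrightarrow> a k \<in> A (P - int k) (Q - int k)) \<Longrightarrow> Dal d P (Q + 1) (Dun d P Q a) m = 0"
proof -
  assume h: "\<And>k. k \<le> m \<Longrightarrow> a k \<in> A (P - int k) (Q - int k)"
  define H where "H i j k = alt i (d i (P - int (j + k)) (Q + 1 - int (j + k)) (d j (P - int k) (Q - int k) (a k)))" for i j k
  have "Dal d P (Q + 1) (Dun d P Q a) m = (\<Sum>i\<le>m. \<Sum>j\<le>m-i. H i j (m - i - j))"
    unfolding Dal_def
  proof (rule sum.cong[OF refl])
    fix i assume i: "i \<in> {..m}"
    have mem: "d j (P - int (m - i - j)) (Q - int (m - i - j)) (a (m - i - j)) \<in> A (P - int (m - i)) (Q + 1 - int (m - i))"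
      if j: "j \<in> {..m-i}" for j
    proof -
      have mm: "d j (P - int (m - i - j)) (Q - int (m - i - j)) (a (m - i - j)) \<in> A (P - int (m - i - j) - int j) (Q - int (m - i - j) + 1 - int j)"
        using h[of "m-i-j"] by (intro dA) auto
      show ?thesis by (rule memA[OF mm]) (use i j in simp_all)
    qed
    have "alt i (d i (P - int (m - i)) (Q + 1 - int (m - i)) (Dun d P Q a (m - i)))
        = (\<Sum>j\<le>m-i. alt i (d i (P - int (m - i)) (Q + 1 - int (m - i)) (d j (P - int (m - i - j)) (Q - int (m - i - j)) (a (m - i - j)))))"
    proof -
      have ds: "d i (P - int (m - i)) (Q + 1 - int (m - i)) (\<Sum>j\<le>m-i. d j (P - int (m - i - j)) (Q - int (m - i - j)) (a (m - i - j)))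
         = (\<Sum>j\<le>m-i. d i (P - int (m - i)) (Q + 1 - int (m - i)) (d j (P - int (m - i - j)) (Q - int (m - i - j)) (a (m - i - j))))"
        by (rule d_sum[OF finite_atMost]) (rule mem)
      show ?thesis unfolding Dun_def ds alt_sum ..
    qed
    also have "\<dots> = (\<Sum>j\<le>m-i. H i j (m - i - j))"
    proof (rule sum.cong[OF refl])
      fix j assume "j \<in> {..m-i}"
      then have e: "j + (m - i - j) = m - i" by auto
      show "alt i (d i (P - int (m - i)) (Q + 1 - int (m - i)) (d j (P - int (m - i - j)) (Q - int (m - i - j)) (a (m - i - j)))) = H i j (m - i - j)"
        unfolding H_def e ..
    qed
    finally show "alt i (d i (P - int (m - i)) (Q + 1 - int (m - i)) (Dun d P Q a (m - i))) = (\<Sum>j\<le>m-i. H i j (m - i - j))" .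
  qed
  also have "\<dots> = (\<Sum>l\<le>m. \<Sum>i\<le>l. H i (l - i) (m - i - (l - i)))"
    by (rule sum_tri)
  also have "\<dots> = (\<Sum>l\<le>m. \<Sum>i\<le>l. H i (l - i) (m - l))"
  proof (intro sum.cong refl)
    fix l i assume "l \<in> {..m}" "i \<in> {..l}"
    then have "m - i - (l - i) = m - l" by auto
    then show "H i (l - i) (m - i - (l - i)) = H i (l - i) (m - l)" by simp
  qed
  also have "\<dots> = 0"
  proof (rule sum.neutral, rule ballI)
    fix l assume l: "l \<in> {..m}"
    have "(\<Sum>i\<le>l. H i (l - i) (m - l)) = (\<Sum>i\<le>l. alt i (d i (P - int (m - l) - int (l - i)) (Q - int (m - l) + 1 - int (l - i))
           (d (l - i) (P - int (m - l)) (Q - int (m - l)) (a (m - l)))))"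
    proof (intro sum.cong refl)
      fix i assume "i \<in> {..l}"
      have e: "P - int (l - i + (m - l)) = P - int (m - l) - int (l - i)" "Q + 1 - int (l - i + (m - l)) = Q - int (m - l) + 1 - int (l - i)"
        by simp_all
      show "H i (l - i) (m - l) = alt i (d i (P - int (m - l) - int (l - i)) (Q - int (m - l) + 1 - int (l - i))
           (d (l - i) (P - int (m - l)) (Q - int (m - l)) (a (m - l))))"
        unfolding H_def e ..
    qed
    also have "\<dots> = 0" using h[of "m - l"] by (intro rel) auto
    finally show "(\<Sum>i\<le>l. H i (l - i) (m - l)) = 0" .
  qed
  finally show ?thesis .
qed

lemma Zset_iff: "x \<in> Zset r A d p q \<longleftrightarrow> (\<exists>a. a 0 = x \<and> (\<forall>j\<le>r-1. a j \<in> A (p - int j) (q - int j)) \<and> (\<forall>l<r. Dal d p q a l = 0))"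
  by (simp add: Zset_def Dal_def)

lemma Bset_iff: "0 < r \<Longrightarrow> x \<in> Bset r A d p q \<longleftrightarrow> x \<in> A p q \<and> (\<exists>b. (\<forall>k<r. b k \<in> A (p + int r - 1 - int k) (q + int r - 2 - int k)) \<and>
    x = Dal d (p + int r - 1) (q + int r - 2) b (r - 1) \<and> (\<forall>l<r-1. Dal d (p + int r - 1) (q + int r - 2) b l = 0))"
proof -
  assume r: "0 < r"
  have e1: "{..<r} = {..r-1}" using r by auto
  have e2: "\<And>l. (l + 2 \<le> r) = (l < r - 1)" using r by auto
  show ?thesis unfolding Bset_def Dal_def e1 e2 by simp
qed

lemma Bset_sub: "x \<in> Bset r A d p q \<Longrightarrow> x \<in> A p q"
  by (simp add: Bset_def)

lemma Bset_r0: "x \<in> Bset 0 A d p q \<longleftrightarrow> x = 0"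
  by (auto simp: Bset_def)

lemma Bset_0: "0 \<in> Bset r A d p q"
  unfolding Bset_def
proof (intro CollectI conjI exI[of _ "\<lambda>_. 0"])
  show "\<forall>k<r. (0::'m) \<in> A (p + int r - 1 - int k) (q + int r - 2 - int k)" by simp
  show "(0::'m) = (\<Sum>i<r. alt i (d i (p + int r - 1 - int (r - 1 - i)) (q + int r - 2 - int (r - 1 - i)) 0))" by simp
  show "\<forall>l. l + 2 \<le> r \<longrightarrow> (\<Sum>i\<le>l. alt i (d i (p + int r - 1 - int (l - i)) (q + int r - 2 - int (l - i)) 0)) = (0::'m)" by simp
qed simp

lemma Bset_diff: "x \<in> Bset r A d p q \<Longrightarrow> y \<in> Bset r A d p q \<Longrightarrow> x - y \<in> Bset r A d p q"
proof (cases "r = 0")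
  case True
  then show "x \<in> Bset r A d p q \<Longrightarrow> y \<in> Bset r A d p q \<Longrightarrow> x - y \<in> Bset r A d p q" by (simp add: Bset_r0)
next
  case False
  then have r: "0 < r" by simp
  assume x: "x \<in> Bset r A d p q" and y: "y \<in> Bset r A d p q"
  from x[unfolded Bset_iff[OF r]] obtain b where xA: "x \<in> A p q" and
    b: "\<forall>k<r. b k \<in> A (p + int r - 1 - int k) (q + int r - 2 - int k)"
      "x = Dal d (p + int r - 1) (q + int r - 2) b (r - 1)" "\<forall>l<r-1. Dal d (p + int r - 1) (q + int r - 2) b l = 0" by blast
  from y[unfolded Bset_iff[OF r]] obtain c where yA: "y \<in> A p q" and
    c: "\<forall>k<r. c k \<in> A (p + int r - 1 - int k) (q + int r - 2 - int k)"
      "y = Dal d (p + int r - 1) (q + int r - 2) c (r - 1)" "\<forall>l<r-1. Dal d (p + int r - 1) (q + int r - 2) c l = 0" by blast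
  have D: "Dal d (p + int r - 1) (q + int r - 2) (\<lambda>k. b k - c k) l = Dal d (p + int r - 1) (q + int r - 2) b l - Dal d (p + int r - 1) (q + int r - 2) c l"
    if "l \<le> r - 1" for l
    by (rule Dal_diff) (use b(1) c(1) that r in auto)
  show ?thesis unfolding Bset_iff[OF r]
  proof (intro conjI exI[of _ "\<lambda>k. b k - c k"])
    show "x - y \<in> A p q" by (rule diffA[OF xA yA])
    show "\<forall>k<r. b k - c k \<in> A (p + int r - 1 - int k) (q + int r - 2 - int k)" using b(1) c(1) by (auto intro: diffA)
    show "x - y = Dal d (p + int r - 1) (q + int r - 2) (\<lambda>k. b k - c k) (r - 1)" using D[of "r-1"] b(2) c(2) by simp
    show "\<forall>l<r-1. Dal d (p + int r - 1) (q + int r - 2) (\<lambda>k. b k - c k) l = 0" using D b(3) c(3) by simp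
  qed
qed

end

context
  fixes n and scA :: "'r::comm_ring_1 \<Rightarrow> 'a::ab_group_add \<Rightarrow> 'a" and A dA
    and scB :: "'r \<Rightarrow> 'b::ab_group_add \<Rightarrow> 'b" and B dB f
  assumes MA: "multicomplex n scA A dA" and hf: "mc_hom scA A dA scB B dB f"
begin

lemma hom_in: "x \<in> A p q \<Longrightarrow> f p q x \<in> B p q"
  using hf by (simp add: mc_hom_def)
lemma hom_add: "x \<in> A p q \<Longrightarrow> y \<in> A p q \<Longrightarrow> f p q (x + y) = f p q x + f p q y"
  using hf by (simp add: mc_hom_def)
lemma hom_zero[simp]: "f p q 0 = 0"
  using hom_add[of 0 p q 0] zeroA[OF MA] by simp
lemma hom_neg: "x \<in> A p q \<Longrightarrow> f p q (- x) = - f p q x"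
proof -
  assume x: "x \<in> A p q"
  have "f p q x + f p q (- x) = 0" using hom_add[of x p q "-x"] negA[OF MA x] x by simp
  from add.inverse_unique[OF this] show ?thesis by simp
qed
lemma hom_diff: "x \<in> A p q \<Longrightarrow> y \<in> A p q \<Longrightarrow> f p q (x - y) = f p q x - f p q y"
  using hom_add[of x p q "-y"] negA[OF MA, of y p q] hom_neg[of y p q] by simp
lemma hom_alt: "x \<in> A p q \<Longrightarrow> f p q (alt j x) = alt j (f p q x)"
  by (simp add: alt_def hom_neg)
lemma hom_sum: "finite S \<Longrightarrow> (\<And>x. x \<in> S \<Longrightarrow> g x \<in> A p q) \<Longrightarrow> f p q (sum g S) = (\<Sum>x\<in>S. f p q (g x))"
proof (induction S rule: finite_induct)
  case (insert x F)
  then show ?case by (simp add: hom_add sumA[OF MA])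
qed simp
lemma hom_d: "x \<in> A p q \<Longrightarrow> f (p - int i) (q + 1 - int i) (dA i p q x) = dB i p q (f p q x)"
  using hf by (simp add: mc_hom_def)

lemma Dal_hom: "(\<And>k. k \<le> m \<Longrightarrow> a k \<in> A (P - int k) (Q - int k)) \<Longrightarrow>
  f (P - int m) (Q + 1 - int m) (Dal dA P Q a m) = Dal dB P Q (\<lambda>k. f (P - int k) (Q - int k) (a k)) m"
proof -
  assume h: "\<And>k. k \<le> m \<Longrightarrow> a k \<in> A (P - int k) (Q - int k)"
  have mem: "alt i (dA i (P - int (m - i)) (Q - int (m - i)) (a (m - i))) \<in> A (P - int m) (Q + 1 - int m)"
    if i: "i \<in> {..m}" for i
  proof -
    have mm: "dA i (P - int (m - i)) (Q - int (m - i)) (a (m - i)) \<in> A (P - int (m - i) - int i) (Q - int (m - i) + 1 - int i)"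
      using h[of "m-i"] by (intro dA[OF MA]) auto
    show ?thesis by (rule altA[OF MA], rule memA[OF MA mm]) (use i in simp_all)
  qed
  have "f (P - int m) (Q + 1 - int m) (Dal dA P Q a m) =
     (\<Sum>i\<le>m. f (P - int m) (Q + 1 - int m) (alt i (dA i (P - int (m - i)) (Q - int (m - i)) (a (m - i)))))"
    unfolding Dal_def by (rule hom_sum[OF finite_atMost]) (rule mem)
  also have "\<dots> = Dal dB P Q (\<lambda>k. f (P - int k) (Q - int k) (a k)) m"
    unfolding Dal_def
  proof (rule sum.cong[OF refl])
    fix i assume i: "i \<in> {..m}"
    have mm: "dA i (P - int (m - i)) (Q - int (m - i)) (a (m - i)) \<in> A (P - int (m - i) - int i) (Q - int (m - i) + 1 - int i)"
      using h[of "m-i"] i by (intro dA[OF MA]) auto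
    have e: "P - int m = P - int (m - i) - int i" "Q + 1 - int m = Q - int (m - i) + 1 - int i" using i by simp_all
    have hx: "a (m - i) \<in> A (P - int (m - i)) (Q - int (m - i))" using h[of "m-i"] by simp
    show "f (P - int m) (Q + 1 - int m) (alt i (dA i (P - int (m - i)) (Q - int (m - i)) (a (m - i)))) =
        alt i (dB i (P - int (m - i)) (Q - int (m - i)) (f (P - int (m - i)) (Q - int (m - i)) (a (m - i))))"
      unfolding e hom_alt[OF mm] hom_d[OF hx] ..
  qed
  finally show ?thesis .
qed

end


lemma coset_eq:
  fixes G :: "'a::ab_group_add set"
  assumes z: "0 \<in> G" and cl: "\<And>u v. u \<in> G \<Longrightarrow> v \<in> G \<Longrightarrow> u - v \<in> G"
  shows "((\<lambda>b. x + b) ` G = (\<lambda>b. y + b) ` G) \<longleftrightarrow> x - y \<in> G"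
proof
  assume "(\<lambda>b. x + b) ` G = (\<lambda>b. y + b) ` G"
  moreover have "x \<in> (\<lambda>b. x + b) ` G" using z by force
  ultimately obtain b where "b \<in> G" "x = y + b" by auto
  then show "x - y \<in> G" by simp
next
  assume xy: "x - y \<in> G"
  have add: "u + v \<in> G" if "u \<in> G" "v \<in> G" for u v
    using cl[OF that(1) cl[OF z that(2)]] by simp
  show "(\<lambda>b. x + b) ` G = (\<lambda>b. y + b) ` G"
  proof (intro equalityI subsetI)
    fix z assume "z \<in> (\<lambda>b. x + b) ` G"
    then obtain b where b: "b \<in> G" "z = x + b" by auto
    then have "z = y + ((x - y) + b)" by simp
    then show "z \<in> (\<lambda>b. y + b) ` G" using add[OF xy b(1)] by blast
  next
    fix z assume "z \<in> (\<lambda>b. y + b) ` G"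
    then obtain b where b: "b \<in> G" "z = y + b" by auto
    then have "z = x + (b - (x - y))" by simp
    then show "z \<in> (\<lambda>b. x + b) ` G" using cl[OF b(1) xy] by blast
  qed
qed

context
  fixes n and sc :: "'r::comm_ring_1 \<Rightarrow> 'm::ab_group_add \<Rightarrow> 'm" and A dA B dB f
  assumes MA: "multicomplex n sc A dA" and MB: "multicomplex n sc B dB" and hf: "mc_hom sc A dA sc B dB f"
begin

lemma Ecoset_eq: "Ecoset r A dA p q x = Ecoset r A dA p q y \<longleftrightarrow> x - y \<in> Bset r A dA p q"
  unfolding Ecoset_def by (rule coset_eq) (auto intro: Bset_0[OF MA] Bset_diff[OF MA])
lemma EcosetB_eq: "Ecoset r B dB p q x = Ecoset r B dB p q y \<longleftrightarrow> x - y \<in> Bset r B dB p q"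
  unfolding Ecoset_def by (rule coset_eq) (auto intro: Bset_0[OF MB] Bset_diff[OF MB])

lemma Bset_hom: "x \<in> Bset r A dA p q \<Longrightarrow> f p q x \<in> Bset r B dB p q"
proof (cases "r = 0")
  case True
  then show "x \<in> Bset r A dA p q \<Longrightarrow> f p q x \<in> Bset r B dB p q"
    by (simp add: Bset_r0[OF MA] Bset_r0[OF MB] hom_zero[OF MA hf])
next
  case False
  then have r: "0 < r" by simp
  assume x: "x \<in> Bset r A dA p q"
  from x[unfolded Bset_iff[OF MA r]] obtain b where xA: "x \<in> A p q" and
    b: "\<forall>k<r. b k \<in> A (p + int r - 1 - int k) (q + int r - 2 - int k)"
      "x = Dal dA (p + int r - 1) (q + int r - 2) b (r - 1)" "\<forall>l<r-1. Dal dA (p + int r - 1) (q + int r - 2) b l = 0" by blast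
  define fb where "fb k = f (p + int r - 1 - int k) (q + int r - 2 - int k) (b k)" for k
  have H: "f (p + int r - 1 - int l) (q + int r - 2 + 1 - int l) (Dal dA (p + int r - 1) (q + int r - 2) b l) =
      Dal dB (p + int r - 1) (q + int r - 2) fb l" if "l \<le> r - 1" for l
    unfolding fb_def by (rule Dal_hom[OF MA hf]) (use b(1) that r in auto)
  have e: "p + int r - 1 - int (r - 1) = p" "q + int r - 2 + 1 - int (r - 1) = q" using r by simp_all
  have fx: "f p q x = Dal dB (p + int r - 1) (q + int r - 2) fb (r - 1)"
    using H[of "r - 1"] unfolding e b(2)[symmetric] by simp
  have z: "Dal dB (p + int r - 1) (q + int r - 2) fb l = 0" if "l < r - 1" for l
    using H[of l] b(3) that by (simp add: hom_zero[OF MA hf])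
  show ?thesis unfolding Bset_iff[OF MB r]
  proof (intro conjI exI[of _ fb])
    show "f p q x \<in> B p q" by (rule hom_in[OF MA hf xA])
    show "\<forall>k<r. fb k \<in> B (p + int r - 1 - int k) (q + int r - 2 - int k)"
      unfolding fb_def using b(1) hom_in[OF MA hf] by blast
    show "f p q x = Dal dB (p + int r - 1) (q + int r - 2) fb (r - 1)" by (rule fx)
    show "\<forall>l<r - 1. Dal dB (p + int r - 1) (q + int r - 2) fb l = 0" using z by blast
  qed
qed

lemma Emap_Ecoset: "x \<in> A p q \<Longrightarrow> Emap r B dB f p q (Ecoset r A dA p q x) = Ecoset r B dB p q (f p q x)"
proof -
  assume x: "x \<in> A p q"
  have "x \<in> Ecoset r A dA p q x" unfolding Ecoset_def using Bset_0[OF MA] by force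
  then have "(SOME z. z \<in> Ecoset r A dA p q x) \<in> Ecoset r A dA p q x" by (rule someI)
  then obtain b where b: "b \<in> Bset r A dA p q" "(SOME z. z \<in> Ecoset r A dA p q x) = x + b"
    unfolding Ecoset_def by auto
  have bA: "b \<in> A p q" using Bset_sub[OF MA b(1)] .
  have "f p q (x + b) - f p q x = f p q b" using hom_add[OF MA hf x bA] by simp
  then have "f p q (x + b) - f p q x \<in> Bset r B dB p q" using Bset_hom[OF b(1)] by simp
  then show ?thesis unfolding Emap_def b(2) EcosetB_eq .
qed

end


lemma Zset_in: "multicomplex n sc A d \<Longrightarrow> x \<in> Zset r A d p q \<Longrightarrow> x \<in> A p q"
  by (auto simp: Zset_iff)

definition LIFT :: "(int \<Rightarrow> int \<Rightarrow> 'm::ab_group_add set) \<Rightarrow> (nat \<Rightarrow> int \<Rightarrow> int \<Rightarrow> 'm \<Rightarrow> 'm) \<Rightarrow> (int \<Rightarrow> int \<Rightarrow> 'm set) \<Rightarrow> (nat \<Rightarrow> int \<Rightarrow> int \<Rightarrow> 'm \<Rightarrow> 'm)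
   \<Rightarrow> (int \<Rightarrow> int \<Rightarrow> 'm \<Rightarrow> 'm) \<Rightarrow> nat \<Rightarrow> bool" where
  "LIFT A dA B dB f s \<longleftrightarrow> (\<forall>p q b. ch B p q b \<and> (\<forall>l<s. Dal dB p q b l = 0) \<longrightarrow>
     (\<exists>a. ch A p q a \<and> (\<forall>l<s. Dal dA p q a l = 0) \<and> (\<forall>k<s. f (p - int k) (q - int k) (a k) = b k)))"

context
  fixes n and sc :: "'r::comm_ring_1 \<Rightarrow> 'm::ab_group_add \<Rightarrow> 'm" and A dA B dB f r
  assumes MA: "multicomplex n sc A dA" and MB: "multicomplex n sc B dB" and hf: "mc_hom sc A dA sc B dB f"
    and qi: "E_quasi_iso r A dA B dB f" and fib: "E_fib r A dA B dB f"
begin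

lemma surjE: "i \<le> Suc r \<Longrightarrow> y \<in> Zset i B dB p q \<Longrightarrow> \<exists>x \<in> Zset i A dA p q. f p q x - y \<in> Bset i B dB p q"
proof -
  assume i: "i \<le> Suc r" and y: "y \<in> Zset i B dB p q"
  have "Ecoset i B dB p q y \<in> Eset i B dB p q" using y by (simp add: Eset_def)
  moreover have "Emap i B dB f p q ` Eset i A dA p q = Eset i B dB p q"
  proof (cases "i \<le> r")
    case True then show ?thesis using fib by (simp add: E_fib_def)
  next
    case False then have "i = Suc r" using i by simp
    then show ?thesis using qi by (simp add: E_quasi_iso_def bij_betw_def)
  qed
  ultimately have "Ecoset i B dB p q y \<in> Emap i B dB f p q ` Eset i A dA p q" by simp
  then obtain X where X: "X \<in> Eset i A dA p q" "Emap i B dB f p q X = Ecoset i B dB p q y"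
    by (metis imageE)
  then obtain x where x: "x \<in> Zset i A dA p q" "X = Ecoset i A dA p q x" by (auto simp: Eset_def)
  have "Ecoset i B dB p q (f p q x) = Ecoset i B dB p q y"
    using X(2) unfolding x(2) Emap_Ecoset[OF MA MB hf Zset_in[OF MA x(1)]] .
  then show ?thesis using x(1) EcosetB_eq[OF MA MB hf] by blast
qed

lemma injE: "x \<in> Zset (Suc r) A dA p q \<Longrightarrow> f p q x \<in> Bset (Suc r) B dB p q \<Longrightarrow> x \<in> Bset (Suc r) A dA p q"
proof -
  assume x: "x \<in> Zset (Suc r) A dA p q" and fx: "f p q x \<in> Bset (Suc r) B dB p q"
  have inj: "inj_on (Emap (Suc r) B dB f p q) (Eset (Suc r) A dA p q)"
    using qi by (simp add: E_quasi_iso_def bij_betw_def)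
  have z: "0 \<in> Zset (Suc r) A dA p q" unfolding Zset_iff[OF MA]
    by (intro exI[of _ "\<lambda>_. 0"]) (auto intro: Dal_shift0[OF MA] zeroA[OF MA])
  have "Emap (Suc r) B dB f p q (Ecoset (Suc r) A dA p q x) = Emap (Suc r) B dB f p q (Ecoset (Suc r) A dA p q 0)"
    unfolding Emap_Ecoset[OF MA MB hf Zset_in[OF MA x]] Emap_Ecoset[OF MA MB hf zeroA[OF MA]]
      hom_zero[OF MA hf] EcosetB_eq[OF MA MB hf] using fx by simp
  then have "Ecoset (Suc r) A dA p q x = Ecoset (Suc r) A dA p q 0"
    by (rule inj_onD[OF inj]) (use x z in \<open>simp_all add: Eset_def\<close>)
  then show ?thesis unfolding Ecoset_eq[OF MA MB hf] by simp
qed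

lemma fsurj: "y \<in> B p q \<Longrightarrow> \<exists>x \<in> A p q. f p q x = y"
proof -
  assume y: "y \<in> B p q"
  have "y \<in> Zset 0 B dB p q" unfolding Zset_iff[OF MB] using y by (intro exI[of _ "\<lambda>_. y"]) auto
  from surjE[OF _ this] obtain x where "x \<in> Zset 0 A dA p q" "f p q x - y \<in> Bset 0 B dB p q" by auto
  then obtain x where x: "x \<in> Zset 0 A dA p q" "f p q x - y = 0" using Bset_r0[OF MB] by blast
  then show ?thesis using Zset_in[OF MA x(1)] by auto
qed


lemma liftD: assumes sr: "s \<le> r" and IH: "LIFT A dA B dB f s" shows "LIFT A dA B dB f (Suc s)"
  unfolding LIFT_def
proof (intro allI impI)
  fix p q b assume "ch B p q b \<and> (\<forall>l<Suc s. Dal dB p q b l = 0)"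
  then have bch: "\<And>k. b k \<in> B (p - int k) (q - int k)" and bD: "\<And>l. l < Suc s \<Longrightarrow> Dal dB p q b l = 0"
    by (auto simp: ch_def)
  have bZ: "b 0 \<in> Zset (Suc s) B dB p q" unfolding Zset_iff[OF MB]
    using bch bD by (intro exI[of _ b]) auto
  obtain x where xZ: "x \<in> Zset (Suc s) A dA p q" and xb: "f p q x - b 0 \<in> Bset (Suc s) B dB p q"
    using surjE[OF _ bZ] sr by auto
  from xZ obtain a0 where a0: "a0 0 = x" "\<And>j. j \<le> s \<Longrightarrow> a0 j \<in> A (p - int j) (q - int j)"
     "\<And>l. l < Suc s \<Longrightarrow> Dal dA p q a0 l = 0"
    unfolding Zset_iff[OF MA] by auto
  define a0' where "a0' k = (if k \<le> s then a0 k else 0)" for k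
  have a0'ch: "\<And>k. a0' k \<in> A (p - int k) (q - int k)" using a0(2) zeroA[OF MA] by (simp add: a0'_def)
  have a0'D: "Dal dA p q a0' l = 0" if "l \<le> s" for l
    using a0(3)[of l] that Dal_local[of l a0' a0 dA p q] by (simp add: a0'_def)
  define P where "P = p + int (Suc s) - 1"
  define Q where "Q = q + int (Suc s) - 2"
  from xb[unfolded Bset_iff[OF MB zero_less_Suc], folded P_def Q_def] obtain v where
    v: "\<And>k. k < Suc s \<Longrightarrow> v k \<in> B (P - int k) (Q - int k)"
      "f p q x - b 0 = Dal dB P Q v s" "\<And>l. l < s \<Longrightarrow> Dal dB P Q v l = 0"
    by auto
  define v' where "v' k = (if k < s then v k else 0)" for k
  have "ch B P Q v' \<and> (\<forall>l<s. Dal dB P Q v' l = 0)"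
  proof
    show "ch B P Q v'" unfolding ch_def v'_def using v(1) zeroA[OF MB] by auto
    show "\<forall>l<s. Dal dB P Q v' l = 0"
    proof (intro allI impI)
      fix l assume l: "l < s"
      have "Dal dB P Q v' l = Dal dB P Q v l" by (rule Dal_local) (use l in \<open>simp add: v'_def\<close>)
      then show "Dal dB P Q v' l = 0" using v(3)[OF l] by simp
    qed
  qed
  with IH obtain u where u: "ch A P Q u" "\<And>l. l < s \<Longrightarrow> Dal dA P Q u l = 0"
    "\<And>k. k < s \<Longrightarrow> f (P - int k) (Q - int k) (u k) = v' k"
    unfolding LIFT_def by blast
  obtain us where us: "us \<in> A (P - int s) (Q - int s)" "f (P - int s) (Q - int s) us = v s"
    using fsurj[OF v(1)[of s]] by auto
  define u' where "u' k = (if k < s then u k else if k = s then us else 0)" for k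
  have u'ch: "\<And>k. u' k \<in> A (P - int k) (Q - int k)"
    using u(1) us(1) zeroA[OF MA] by (auto simp: u'_def ch_def)
  have u'D: "\<And>l. l < s \<Longrightarrow> Dal dA P Q u' l = 0"
  proof -
    fix l assume l: "l < s"
    have "Dal dA P Q u' l = Dal dA P Q u l" by (rule Dal_local) (use l in \<open>simp add: u'_def\<close>)
    then show "Dal dA P Q u' l = 0" using u(2)[OF l] by simp
  qed
  have ePQ: "P - int s = p" "Q + 1 - int s = q" by (simp_all add: P_def Q_def)
  define \<gamma> where "\<gamma> = Dal dA P Q u' s"
  have "\<gamma> \<in> A (P - int s) (Q + 1 - int s)" unfolding \<gamma>_def by (rule Dal_in[OF MA]) (rule u'ch)
  then have \<gamma>A: "\<gamma> \<in> A p q" unfolding ePQ .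
  have h1: "f (P - int s) (Q + 1 - int s) \<gamma> = Dal dB P Q (\<lambda>k. f (P - int k) (Q - int k) (u' k)) s"
    unfolding \<gamma>_def by (rule Dal_hom[OF MA hf]) (rule u'ch)
  have h2: "Dal dB P Q (\<lambda>k. f (P - int k) (Q - int k) (u' k)) s = Dal dB P Q v s"
  proof (rule Dal_local)
    fix k assume k: "k \<le> s"
    show "f (P - int k) (Q - int k) (u' k) = v k"
    proof (cases "k < s")
      case True then show ?thesis using u(3)[OF True] by (simp add: u'_def v'_def)
    next
      case False then have "k = s" using k by simp
      then show ?thesis using us(2) by (simp add: u'_def)
    qed
  qed
  have f\<gamma>: "f p q \<gamma> = f p q x - b 0" using h1 h2 v(2) unfolding ePQ by simp
  define W where "W = Dun dA P Q (\<lambda>k. alt k (u' k))"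
  have Wch: "\<And>m. W m \<in> A (P - int m) (Q + 1 - int m)"
    unfolding W_def by (rule Dun_in[OF MA]) (rule altA[OF MA u'ch])
  have WD: "\<And>m. Dal dA P (Q + 1) W m = 0"
    unfolding W_def by (rule DD[OF MA]) (rule altA[OF MA u'ch])
  have Wv: "\<And>m. W m = alt m (Dal dA P Q u' m)"
  proof -
    fix m
    have "Dal dA P Q (\<lambda>k. alt k (alt k (u' k))) m = alt m (W m)"
      unfolding W_def by (rule twist[OF MA]) (rule altA[OF MA u'ch])
    then have "Dal dA P Q u' m = alt m (W m)" by simp
    then show "W m = alt m (Dal dA P Q u' m)" by simp
  qed
  define e where "e k = W (k + s)" for k
  have ech: "\<And>k. e k \<in> A (p - int k) (q - int k)"
  proof -
    fix k
    show "e k \<in> A (p - int k) (q - int k)" unfolding e_def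
      by (rule memA[OF MA Wch]) (simp_all add: P_def Q_def)
  qed
  have eD: "\<And>m. Dal dA p q e m = 0"
  proof -
    fix m
    have W0: "\<And>k. k < s \<Longrightarrow> W k = 0" using Wv u'D by simp
    have "Dal dA P (Q + 1) W (m + s) = Dal dA (P - int s) (Q + 1 - int s) (\<lambda>k. W (k + s)) m"
      by (rule Dal_shift[OF MA]) (rule W0)
    moreover have "(\<lambda>k. W (k + s)) = e" by (rule ext) (simp add: e_def)
    ultimately show "Dal dA p q e m = 0" using WD unfolding ePQ by simp
  qed
  have e0: "e 0 = alt s \<gamma>" by (simp add: e_def Wv \<gamma>_def)
  define a where "a k = a0' k - alt s (e k)" for k
  have ach: "\<And>k. a k \<in> A (p - int k) (q - int k)"
    unfolding a_def by (rule diffA[OF MA a0'ch altA[OF MA ech]])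
  have afun: "a = (\<lambda>k. a0' k - alt s (e k))" by (rule ext) (simp add: a_def)
  have aD: "\<And>l. l \<le> s \<Longrightarrow> Dal dA p q a l = 0"
  proof -
    fix l assume l: "l \<le> s"
    have "Dal dA p q a l = Dal dA p q a0' l - Dal dA p q (\<lambda>k. alt s (e k)) l"
      unfolding afun by (rule Dal_diff[OF MA]) (rule a0'ch, rule altA[OF MA ech])
    also have "\<dots> = Dal dA p q a0' l - alt s (Dal dA p q e l)"
      by (subst Dal_alt[OF MA]) (rule ech, rule refl)
    finally show "Dal dA p q a l = 0" using a0'D[OF l] eD by simp
  qed
  have xA: "x \<in> A p q" by (rule Zset_in[OF MA xZ])
  have "a 0 = x - \<gamma>" by (simp add: a_def a0'_def a0(1) e0)
  then have fa0: "f p q (a 0) = b 0" using hom_diff[OF MA hf xA \<gamma>A] f\<gamma> by simp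
  define c where "c k = b k - f (p - int k) (q - int k) (a k)" for k
  have cch: "\<And>k. c k \<in> B (p - int k) (q - int k)"
    unfolding c_def by (rule diffA[OF MB bch hom_in[OF MA hf ach]])
  have c0: "c 0 = 0" by (simp add: c_def fa0)
  have cfun: "c = (\<lambda>k. b k - f (p - int k) (q - int k) (a k))" by (rule ext) (simp add: c_def)
  have cD: "\<And>l. l \<le> s \<Longrightarrow> Dal dB p q c l = 0"
  proof -
    fix l assume l: "l \<le> s"
    have "Dal dB p q c l = Dal dB p q b l - Dal dB p q (\<lambda>k. f (p - int k) (q - int k) (a k)) l"
      unfolding cfun by (rule Dal_diff[OF MB]) (rule bch, rule hom_in[OF MA hf ach])
    also have "Dal dB p q (\<lambda>k. f (p - int k) (q - int k) (a k)) l = f (p - int l) (q + 1 - int l) (Dal dA p q a l)"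
      by (rule Dal_hom[OF MA hf, symmetric]) (rule ach)
    finally show "Dal dB p q c l = 0" using aD[OF l] bD[of l] l hom_zero[OF MA hf] by simp
  qed
  define \<rho> where "\<rho> k = c (k + 1)" for k
  have "ch B (p - 1) (q - 1) \<rho> \<and> (\<forall>l<s. Dal dB (p - 1) (q - 1) \<rho> l = 0)"
  proof
    show "ch B (p - 1) (q - 1) \<rho>" unfolding ch_def
    proof
      fix k show "\<rho> k \<in> B (p - 1 - int k) (q - 1 - int k)" unfolding \<rho>_def
        by (rule memA[OF MB cch]) simp_all
    qed
    show "\<forall>l<s. Dal dB (p - 1) (q - 1) \<rho> l = 0"
    proof (intro allI impI)
      fix l assume l: "l < s"
      have "Dal dB p q c (l + 1) = Dal dB (p - int 1) (q - int 1) (\<lambda>k. c (k + 1)) l"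
        by (rule Dal_shift[OF MB]) (simp add: c0)
      moreover have "(\<lambda>k. c (k + 1)) = \<rho>" by (rule ext) (simp add: \<rho>_def)
      ultimately have "Dal dB (p - 1) (q - 1) \<rho> l = Dal dB p q c (l + 1)" by simp
      then show "Dal dB (p - 1) (q - 1) \<rho> l = 0" using cD[of "l+1"] l by simp
    qed
  qed
  with IH obtain a'' where a'': "ch A (p - 1) (q - 1) a''" "\<And>l. l < s \<Longrightarrow> Dal dA (p - 1) (q - 1) a'' l = 0"
    "\<And>k. k < s \<Longrightarrow> f (p - 1 - int k) (q - 1 - int k) (a'' k) = \<rho> k"
    unfolding LIFT_def by blast
  define sh where "sh k = (if k = 0 then 0 else a'' (k - 1))" for k
  have shch: "\<And>k. sh k \<in> A (p - int k) (q - int k)"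
  proof -
    fix k show "sh k \<in> A (p - int k) (q - int k)"
    proof (cases k)
      case 0 then show ?thesis by (simp add: sh_def zeroA[OF MA])
    next
      case (Suc k')
      have "a'' k' \<in> A (p - 1 - int k') (q - 1 - int k')" using a''(1) by (simp add: ch_def)
      then show ?thesis unfolding Suc sh_def by (simp add: algebra_simps)
    qed
  qed
  have shD: "\<And>l. l \<le> s \<Longrightarrow> Dal dA p q sh l = 0"
  proof -
    fix l assume l: "l \<le> s"
    show "Dal dA p q sh l = 0"
    proof (cases l)
      case 0 then show ?thesis by (intro Dal_shift0[OF MA]) (simp add: sh_def)
    next
      case (Suc l')
      have "Dal dA p q sh (l' + 1) = Dal dA (p - int 1) (q - int 1) (\<lambda>k. sh (k + 1)) l'"
        by (rule Dal_shift[OF MA]) (simp add: sh_def)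
      moreover have "(\<lambda>k. sh (k + 1)) = a''" by (rule ext) (simp add: sh_def)
      ultimately show ?thesis using a''(2)[of l'] l Suc by simp
    qed
  qed
  define af where "af k = a k + sh k" for k
  have "ch A p q af" unfolding ch_def af_def using addA[OF MA ach shch] by blast
  moreover have "\<forall>l<Suc s. Dal dA p q af l = 0"
  proof (intro allI impI)
    fix l assume l: "l < Suc s"
    have affun: "af = (\<lambda>k. a k + sh k)" by (rule ext) (simp add: af_def)
    have "Dal dA p q af l = Dal dA p q a l + Dal dA p q sh l"
      unfolding affun by (rule Dal_add[OF MA]) (rule ach, rule shch)
    then show "Dal dA p q af l = 0" using aD shD l by simp
  qed
  moreover have "\<forall>k<Suc s. f (p - int k) (q - int k) (af k) = b k"
  proof (intro allI impI)
    fix k assume k: "k < Suc s"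
    have "f (p - int k) (q - int k) (af k) = f (p - int k) (q - int k) (a k) + f (p - int k) (q - int k) (sh k)"
      unfolding af_def by (rule hom_add[OF MA hf ach shch])
    moreover have "f (p - int k) (q - int k) (sh k) = c k"
    proof (cases k)
      case 0 then show ?thesis by (simp add: sh_def c0 hom_zero[OF MA hf])
    next
      case (Suc k')
      have e: "p - int k = p - 1 - int k'" "q - int k = q - 1 - int k'" using Suc by simp_all
      show ?thesis unfolding e using a''(3)[of k'] k Suc by (simp add: sh_def \<rho>_def)
    qed
    ultimately show "f (p - int k) (q - int k) (af k) = b k" by (simp add: c_def)
  qed
  ultimately show "\<exists>a. ch A p q a \<and> (\<forall>l<Suc s. Dal dA p q a l = 0) \<and> (\<forall>k<Suc s. f (p - int k) (q - int k) (a k) = b k)"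
    by blast
qed



lemma liftE: assumes sr: "Suc r \<le> s" and IH: "LIFT A dA B dB f s" and IR: "LIFT A dA B dB f (Suc r)"
  shows "LIFT A dA B dB f (Suc s)"
  unfolding LIFT_def
proof (intro allI impI)
  fix p q b assume "ch B p q b \<and> (\<forall>l<Suc s. Dal dB p q b l = 0)"
  then have bch: "\<And>k. b k \<in> B (p - int k) (q - int k)" and bD: "\<And>l. l < Suc s \<Longrightarrow> Dal dB p q b l = 0"
    by (auto simp: ch_def)
  have "ch B p q b \<and> (\<forall>l<s. Dal dB p q b l = 0)" using bch bD by (simp add: ch_def)
  with IH obtain a0 where a0: "ch A p q a0" "\<And>l. l < s \<Longrightarrow> Dal dA p q a0 l = 0"
    "\<And>k. k < s \<Longrightarrow> f (p - int k) (q - int k) (a0 k) = b k"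
    unfolding LIFT_def by blast
  obtain as where as: "as \<in> A (p - int s) (q - int s)" "f (p - int s) (q - int s) as = b s"
    using fsurj[OF bch[of s]] by auto
  define a1 where "a1 k = (if k < s then a0 k else if k = s then as else 0)" for k
  have a1ch: "\<And>k. a1 k \<in> A (p - int k) (q - int k)"
    using a0(1) as(1) zeroA[OF MA] by (auto simp: a1_def ch_def)
  have a1D: "\<And>l. l < s \<Longrightarrow> Dal dA p q a1 l = 0"
  proof -
    fix l assume l: "l < s"
    have "Dal dA p q a1 l = Dal dA p q a0 l" by (rule Dal_local) (use l in \<open>simp add: a1_def\<close>)
    then show "Dal dA p q a1 l = 0" using a0(2)[OF l] by simp
  qed
  have fa1: "\<And>k. k \<le> s \<Longrightarrow> f (p - int k) (q - int k) (a1 k) = b k"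
  proof -
    fix k assume k: "k \<le> s"
    show "f (p - int k) (q - int k) (a1 k) = b k"
    proof (cases "k < s")
      case True then show ?thesis using a0(3)[OF True] by (simp add: a1_def)
    next
      case False then have "k = s" using k by simp
      then show ?thesis using as(2) by (simp add: a1_def)
    qed
  qed
  define \<rho> where "\<rho> = Dal dA p q a1 s"
  have \<rho>A: "\<rho> \<in> A (p - int s) (q + 1 - int s)" unfolding \<rho>_def by (rule Dal_in[OF MA]) (rule a1ch)
  define W where "W = Dun dA p q (\<lambda>k. alt k (a1 k))"
  have Wch: "\<And>m. W m \<in> A (p - int m) (q + 1 - int m)"
    unfolding W_def by (rule Dun_in[OF MA]) (rule altA[OF MA a1ch])
  have WD: "\<And>m. Dal dA p (q + 1) W m = 0"
    unfolding W_def by (rule DD[OF MA]) (rule altA[OF MA a1ch])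
  have Wv: "\<And>m. W m = alt m (Dal dA p q a1 m)"
  proof -
    fix m
    have "Dal dA p q (\<lambda>k. alt k (alt k (a1 k))) m = alt m (W m)"
      unfolding W_def by (rule twist[OF MA]) (rule altA[OF MA a1ch])
    then have "Dal dA p q a1 m = alt m (W m)" by simp
    then show "W m = alt m (Dal dA p q a1 m)" by simp
  qed
  define p1 where "p1 = p - int s"
  define q1 where "q1 = q + 1 - int s"
  define e where "e k = W (k + s)" for k
  have ech: "\<And>k. e k \<in> A (p1 - int k) (q1 - int k)"
  proof -
    fix k
    show "e k \<in> A (p1 - int k) (q1 - int k)" unfolding e_def
      by (rule memA[OF MA Wch]) (simp_all add: p1_def q1_def)
  qed
  have eD: "\<And>m. Dal dA p1 q1 e m = 0"
  proof -
    fix m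
    have W0: "\<And>k. k < s \<Longrightarrow> W k = 0" using Wv a1D by simp
    have "Dal dA p (q + 1) W (m + s) = Dal dA (p - int s) (q + 1 - int s) (\<lambda>k. W (k + s)) m"
      by (rule Dal_shift[OF MA]) (rule W0)
    moreover have "(\<lambda>k. W (k + s)) = e" by (rule ext) (simp add: e_def)
    ultimately show "Dal dA p1 q1 e m = 0" using WD unfolding p1_def q1_def by simp
  qed
  have e0: "e 0 = alt s \<rho>" by (simp add: e_def Wv \<rho>_def)
  have e0Z: "e 0 \<in> Zset (Suc r) A dA p1 q1" unfolding Zset_iff[OF MA]
    using ech eD by (intro exI[of _ e]) auto
  have f\<rho>: "f p1 q1 \<rho> = 0"
  proof -
    have "f (p - int s) (q + 1 - int s) \<rho> = Dal dB p q (\<lambda>k. f (p - int k) (q - int k) (a1 k)) s"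
      unfolding \<rho>_def by (rule Dal_hom[OF MA hf]) (rule a1ch)
    also have "\<dots> = Dal dB p q b s" by (rule Dal_local) (rule fa1)
    finally show ?thesis using bD[of s] unfolding p1_def q1_def by simp
  qed
  have \<rho>A1: "\<rho> \<in> A p1 q1" using \<rho>A unfolding p1_def q1_def .
  have fe0: "f p1 q1 (e 0) = 0" unfolding e0 hom_alt[OF MA hf \<rho>A1] f\<rho> by simp
  have e0B: "e 0 \<in> Bset (Suc r) A dA p1 q1"
    by (rule injE[OF e0Z]) (simp add: fe0 Bset_0[OF MB])
  define t where "t = s - r"
  define P where "P = p1 + int (Suc r) - 1"
  define Q where "Q = q1 + int (Suc r) - 2"
  have ePt: "P = p - int t" "Q = q - int t" using sr by (simp_all add: P_def Q_def p1_def q1_def t_def)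
  have ePQ: "P - int r = p1" "Q + 1 - int r = q1" by (simp_all add: P_def Q_def)
  from e0B[unfolded Bset_iff[OF MA zero_less_Suc], folded P_def Q_def] obtain v where
    v: "\<And>k. k < Suc r \<Longrightarrow> v k \<in> A (P - int k) (Q - int k)"
      "e 0 = Dal dA P Q v r" "\<And>l. l < r \<Longrightarrow> Dal dA P Q v l = 0"
    by auto
  define v' where "v' k = (if k \<le> r then v k else 0)" for k
  have v'ch: "\<And>k. v' k \<in> A (P - int k) (Q - int k)" using v(1) zeroA[OF MA] by (auto simp: v'_def)
  have v'D: "\<And>l. l \<le> r \<Longrightarrow> Dal dA P Q v' l = Dal dA P Q v l"
    by (rule Dal_local) (simp add: v'_def)
  define fv where "fv k = f (P - int k) (Q - int k) (v' k)" for k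
  have fvch: "\<And>k. fv k \<in> B (P - int k) (Q - int k)" unfolding fv_def by (rule hom_in[OF MA hf v'ch])
  have fvD: "\<And>l. l < Suc r \<Longrightarrow> Dal dB P Q fv l = 0"
  proof -
    fix l assume l: "l < Suc r"
    have fvfun: "fv = (\<lambda>k. f (P - int k) (Q - int k) (v' k))" by (rule ext) (simp add: fv_def)
    have "Dal dB P Q fv l = f (P - int l) (Q + 1 - int l) (Dal dA P Q v' l)"
      unfolding fvfun by (rule Dal_hom[OF MA hf, symmetric]) (rule v'ch)
    moreover have "f (P - int l) (Q + 1 - int l) (Dal dA P Q v' l) = 0"
    proof (cases "l < r")
      case True then show ?thesis using v'D[of l] v(3)[OF True] hom_zero[OF MA hf] by simp
    next
      case False then have "l = r" using l by simp
      then show ?thesis using v'D[of r] v(2) fe0 ePQ by simp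
    qed
    ultimately show "Dal dB P Q fv l = 0" by simp
  qed
  have "ch B P Q fv \<and> (\<forall>l<Suc r. Dal dB P Q fv l = 0)" using fvch fvD by (simp add: ch_def)
  with IR obtain u where u: "ch A P Q u" "\<And>l. l < Suc r \<Longrightarrow> Dal dA P Q u l = 0"
    "\<And>k. k < Suc r \<Longrightarrow> f (P - int k) (Q - int k) (u k) = fv k"
    unfolding LIFT_def by blast
  have uch: "\<And>k. u k \<in> A (P - int k) (Q - int k)" using u(1) by (simp add: ch_def)
  define \<delta> where "\<delta> k = (if k \<le> r then v' k - u k else 0)" for k
  have \<delta>ch: "\<And>k. \<delta> k \<in> A (P - int k) (Q - int k)"
    using diffA[OF MA v'ch uch] zeroA[OF MA] by (simp add: \<delta>_def)
  have \<delta>D: "\<And>l. l \<le> r \<Longrightarrow> Dal dA P Q \<delta> l = Dal dA P Q v' l - Dal dA P Q u l"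
  proof -
    fix l assume l: "l \<le> r"
    have "Dal dA P Q \<delta> l = Dal dA P Q (\<lambda>k. v' k - u k) l" by (rule Dal_local) (use l in \<open>simp add: \<delta>_def\<close>)
    also have "\<dots> = Dal dA P Q v' l - Dal dA P Q u l" by (rule Dal_diff[OF MA]) (rule v'ch, rule uch)
    finally show "Dal dA P Q \<delta> l = Dal dA P Q v' l - Dal dA P Q u l" .
  qed
  have \<delta>D1: "\<And>l. l < r \<Longrightarrow> Dal dA P Q \<delta> l = 0" using \<delta>D v'D v(3) u(2) by simp
  have \<delta>D2: "Dal dA P Q \<delta> r = e 0" using \<delta>D[of r] v'D[of r] v(2) u(2)[of r] by simp
  have f\<delta>: "\<And>k. f (P - int k) (Q - int k) (\<delta> k) = 0"
  proof -
    fix k show "f (P - int k) (Q - int k) (\<delta> k) = 0"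
    proof (cases "k \<le> r")
      case True
      then show ?thesis using hom_diff[OF MA hf v'ch uch, of k] u(3)[of k] by (simp add: \<delta>_def fv_def)
    next
      case False then show ?thesis by (simp add: \<delta>_def hom_zero[OF MA hf])
    qed
  qed
  define sh where "sh k = (if t \<le> k then alt s (\<delta> (k - t)) else 0)" for k
  have sh_bd: "\<And>k. t \<le> k \<Longrightarrow> P - int (k - t) = p - int k \<and> Q - int (k - t) = q - int k"
    unfolding ePt by simp
  have shch: "\<And>k. sh k \<in> A (p - int k) (q - int k)"
  proof -
    fix k show "sh k \<in> A (p - int k) (q - int k)"
    proof (cases "t \<le> k")
      case True
      have mm: "alt s (\<delta> (k - t)) \<in> A (P - int (k - t)) (Q - int (k - t))" by (rule altA[OF MA \<delta>ch])
      have e: "P - int (k - t) = p - int k" "Q - int (k - t) = q - int k" using sh_bd[OF True] by auto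
      have "sh k = alt s (\<delta> (k - t))" using True by (simp add: sh_def)
      then show ?thesis using mm[unfolded e] by simp
    next
      case False then show ?thesis by (simp add: sh_def zeroA[OF MA])
    qed
  qed
  have shD: "\<And>m. Dal dA p q sh m = (if m < t then 0 else alt s (Dal dA P Q \<delta> (m - t)))"
  proof -
    fix m show "Dal dA p q sh m = (if m < t then 0 else alt s (Dal dA P Q \<delta> (m - t)))"
    proof (cases "m < t")
      case True then show ?thesis by (simp, intro Dal_shift0[OF MA]) (simp add: sh_def)
    next
      case False
      then have mm: "m = (m - t) + t" by simp
      have "Dal dA p q sh ((m - t) + t) = Dal dA (p - int t) (q - int t) (\<lambda>k. sh (k + t)) (m - t)"
        by (rule Dal_shift[OF MA]) (simp add: sh_def)
      moreover have "(\<lambda>k. sh (k + t)) = (\<lambda>k. alt s (\<delta> k))" by (rule ext) (simp add: sh_def)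
      moreover have "Dal dA P Q (\<lambda>k. alt s (\<delta> k)) (m - t) = alt s (Dal dA P Q \<delta> (m - t))"
        by (rule Dal_alt[OF MA]) (rule \<delta>ch)
      ultimately show ?thesis using False mm unfolding ePt by simp
    qed
  qed
  define a where "a k = a1 k - sh k" for k
  have afun: "a = (\<lambda>k. a1 k - sh k)" by (rule ext) (simp add: a_def)
  have "ch A p q a" unfolding ch_def a_def using diffA[OF MA a1ch shch] by blast
  moreover have "\<forall>l<Suc s. Dal dA p q a l = 0"
  proof (intro allI impI)
    fix l assume l: "l < Suc s"
    have "Dal dA p q a l = Dal dA p q a1 l - Dal dA p q sh l"
      unfolding afun by (rule Dal_diff[OF MA]) (rule a1ch, rule shch)
    moreover have "Dal dA p q a1 l = Dal dA p q sh l"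
    proof (cases "l < s")
      case True
      then have "Dal dA p q sh l = 0" using shD[of l] \<delta>D1[of "l - t"] t_def by auto
      then show ?thesis using a1D[OF True] by simp
    next
      case False then have ls: "l = s" using l by simp
      have "s - t = r" "\<not> s < t" using sr by (simp_all add: t_def)
      then have "Dal dA p q sh s = alt s (e 0)" using shD[of s] \<delta>D2 by simp
      then show ?thesis using ls e0 \<rho>_def by simp
    qed
    ultimately show "Dal dA p q a l = 0" by simp
  qed
  moreover have "\<forall>k<Suc s. f (p - int k) (q - int k) (a k) = b k"
  proof (intro allI impI)
    fix k assume k: "k < Suc s"
    have "f (p - int k) (q - int k) (a k) = f (p - int k) (q - int k) (a1 k) - f (p - int k) (q - int k) (sh k)"
      unfolding a_def by (rule hom_diff[OF MA hf a1ch shch])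
    moreover have "f (p - int k) (q - int k) (sh k) = 0"
    proof (cases "t \<le> k")
      case True
      have mm: "f (P - int (k - t)) (Q - int (k - t)) (alt s (\<delta> (k - t))) = 0"
        using hom_alt[OF MA hf \<delta>ch] f\<delta> by simp
      have e: "P - int (k - t) = p - int k" "Q - int (k - t) = q - int k" using sh_bd[OF True] by auto
      have "sh k = alt s (\<delta> (k - t))" using True by (simp add: sh_def)
      then show ?thesis using mm[unfolded e] by simp
    next
      case False then show ?thesis by (simp add: sh_def hom_zero[OF MA hf])
    qed
    ultimately show "f (p - int k) (q - int k) (a k) = b k" using fa1[of k] k by simp
  qed
  ultimately show "\<exists>a. ch A p q a \<and> (\<forall>l<Suc s. Dal dA p q a l = 0) \<and> (\<forall>k<Suc s. f (p - int k) (q - int k) (a k) = b k)"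
    by blast
qed

lemma LIFT0: "LIFT A dA B dB f 0"
  unfolding LIFT_def ch_def using zeroA[OF MA] by (intro allI impI exI[of _ "\<lambda>_. 0"]) auto

lemma lift_small: "s \<le> Suc r \<Longrightarrow> LIFT A dA B dB f s"
proof (induction s)
  case 0 show ?case by (rule LIFT0)
next
  case (Suc s) then show ?case using liftD by simp
qed

lemma lift_all: "LIFT A dA B dB f s"
proof (induction s)
  case 0 show ?case by (rule LIFT0)
next
  case (Suc s)
  show ?case
  proof (cases "s \<le> r")
    case True then show ?thesis using lift_small by simp
  next
    case False then show ?thesis using liftE[OF _ Suc lift_small[OF order.refl]] by simp
  qed
qed

end


lemma mc_hom_comp: "mc_hom scZ Z dZ sc A dA h \<Longrightarrow> mc_hom sc A dA scB B dB f \<Longrightarrow>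
  mc_hom scZ Z dZ scB B dB (\<lambda>p q x. f p q (h p q x))"
  unfolding mc_hom_def by simp

theorem mainTheorem18:
  fixes n :: enat and r s :: nat and p q :: int
    and scZ :: "'r::comm_ring_1 \<Rightarrow> 'z::ab_group_add \<Rightarrow> 'z"
    and Z :: "int \<Rightarrow> int \<Rightarrow> 'z set" and dZ :: "nat \<Rightarrow> int \<Rightarrow> int \<Rightarrow> 'z \<Rightarrow> 'z"
    and gen :: "nat \<Rightarrow> 'z"
    and sc :: "'r \<Rightarrow> 'm::ab_group_add \<Rightarrow> 'm"
    and A B :: "int \<Rightarrow> int \<Rightarrow> 'm set" and dA dB :: "nat \<Rightarrow> int \<Rightarrow> int \<Rightarrow> 'm \<Rightarrow> 'm"
    and f :: "int \<Rightarrow> int \<Rightarrow> 'm \<Rightarrow> 'm" and g :: "int \<Rightarrow> int \<Rightarrow> 'z \<Rightarrow> 'm"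
  assumes "2 \<le> n"
    and "is_ZW n s p q scZ Z dZ gen sc"
    and "multicomplex n sc A dA" and "multicomplex n sc B dB"
    and "mc_hom sc A dA sc B dB f"
    and "E_quasi_iso r A dA B dB f"
    and "E_fib r A dA B dB f"
    and "mc_hom scZ Z dZ sc B dB g"
  shows "\<exists>h. mc_hom scZ Z dZ sc A dA h \<and>
              (\<forall>p' q'. \<forall>x\<in>Z p' q'. f p' q' (h p' q' x) = g p' q' x)"
proof -
  note ZW = assms(2) and MA = assms(3) and MB = assms(4) and hf = assms(5) and qi = assms(6)
    and fib = assms(7) and hg = assms(8)
  have MZ: "multicomplex n scZ Z dZ" and tupZ: "ZW_tuple s p q Z dZ gen"
    using ZW by (simp_all add: is_ZW_def)
  have genZ: "\<And>j. j \<le> s - 1 \<Longrightarrow> gen j \<in> Z (p - int j) (q - int j)"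
    and genD: "\<And>l. l < s \<Longrightarrow> Dal dZ p q gen l = 0"
    using tupZ by (simp_all add: ZW_tuple_def Dal_def)
  define bb where "bb j = g (p - int j) (q - int j) (gen j)" for j
  have bbB: "\<And>j. j \<le> s - 1 \<Longrightarrow> bb j \<in> B (p - int j) (q - int j)"
    unfolding bb_def by (rule hom_in[OF MZ hg genZ])
  have bbD: "\<And>l. l < s \<Longrightarrow> Dal dB p q bb l = 0"
  proof -
    fix l assume l: "l < s"
    have bbfun: "bb = (\<lambda>k. g (p - int k) (q - int k) (gen k))" by (rule ext) (simp add: bb_def)
    have "Dal dB p q bb l = g (p - int l) (q + 1 - int l) (Dal dZ p q gen l)"
      unfolding bbfun by (rule Dal_hom[OF MZ hg, symmetric]) (rule genZ, use l in simp)
    then show "Dal dB p q bb l = 0" using genD[OF l] hom_zero[OF MZ hg] by simp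
  qed
  obtain a where aT: "ZW_tuple s p q A dA a" and fa: "\<And>j. j \<le> s - 1 \<Longrightarrow> f (p - int j) (q - int j) (a j) = bb j"
  proof (cases "s = 0")
    case True
    have "bb 0 \<in> B p q" using bbB[of 0] by simp
    then obtain x where x: "x \<in> A p q" "f p q x = bb 0" using fsurj[OF MA MB hf qi fib] by blast
    show ?thesis
    proof (rule that[of "\<lambda>_. x"])
      show "ZW_tuple s p q A dA (\<lambda>_. x)" using True x(1) by (simp add: ZW_tuple_def)
      show "\<And>j. j \<le> s - 1 \<Longrightarrow> f (p - int j) (q - int j) x = bb j" using True x(2) by simp
    qed
  next
    case False
    define b' where "b' k = (if k < s then bb k else 0)" for k
    have "ch B p q b'" unfolding ch_def b'_def using bbB zeroA[OF MB] False by auto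
    moreover have "\<forall>l<s. Dal dB p q b' l = 0"
    proof (intro allI impI)
      fix l assume l: "l < s"
      have "Dal dB p q b' l = Dal dB p q bb l" by (rule Dal_local) (use l in \<open>simp add: b'_def\<close>)
      then show "Dal dB p q b' l = 0" using bbD[OF l] by simp
    qed
    ultimately obtain a where a: "ch A p q a" "\<And>l. l < s \<Longrightarrow> Dal dA p q a l = 0"
      "\<And>k. k < s \<Longrightarrow> f (p - int k) (q - int k) (a k) = b' k"
      using lift_all[OF MA MB hf qi fib, of s] unfolding LIFT_def by blast
    show ?thesis
    proof (rule that[of a])
      show "ZW_tuple s p q A dA a" using a(1,2) by (simp add: ZW_tuple_def Dal_def ch_def)
      show "\<And>j. j \<le> s - 1 \<Longrightarrow> f (p - int j) (q - int j) (a j) = bb j"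
        using a(3) False by (simp add: b'_def)
    qed
  qed
  from ZW MA aT obtain h where h: "mc_hom scZ Z dZ sc A dA h" "\<And>j. j \<le> s - 1 \<Longrightarrow> h (p - int j) (q - int j) (gen j) = a j"
    unfolding is_ZW_def by blast
  have fh: "mc_hom scZ Z dZ sc B dB (\<lambda>p q x. f p q (h p q x))" by (rule mc_hom_comp[OF h(1) hf])
  have agree: "\<forall>j\<le>s - 1. f (p - int j) (q - int j) (h (p - int j) (q - int j) (gen j)) = g (p - int j) (q - int j) (gen j)"
    using h(2) fa by (simp add: bb_def)
  have "\<forall>p' q'. \<forall>x\<in>Z p' q'. f p' q' (h p' q' x) = g p' q' x"
    using ZW MB fh hg agree unfolding is_ZW_def by blast
  with h(1) show ?thesis by blast
qed

end
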